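(* Let $k\ge6$, $0<\theta<\frac{k^2-6k+1}{(k+1)^2}$, and let $$s^\pm=\frac{k-3-(k+1)\theta\pm\sqrt{(1-\theta)[k^2-6k+1-(k+1)^2\theta]}}{4(1+\theta)},\qquad \lambda^\pm=s^\pm\Bigl(\frac{1+2s^\pm}{1+(1+\theta)s^\pm}\Bigr)^k.$$ If $\lambda\in(\lambda^-,\lambda^+)$, then with $\phi(x)=\lambda\bigl(\frac{1+(1+\theta)x}{1+2x}\bigr)^k$ the system $z=\phi(t)$, $t=\phi(z)$ has at least three solutions in $(0,\infty)^2$, namely $(x_*,x_* )$, $(x_0,x_1)$, $(x_1,x_0)$ with $x_0\ne x_1$, where $x_*$ is the unique positive fixed point of $\phi$. Consequently there are at least three 2-periodic splitting Gibbs measures of the SCWR model.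
   Context: SCWR model on the Cayley tree of order $k$, spins $\{-1,0,1\}$, activity $\lambda>0$, $\theta=e^{-J\beta}\in(0,1)$. Splitting Gibbs measures correspond to positive solutions $(z_{1,i},z_{2,i})_{i}$ of $z_{1,i}=\lambda\prod_{j\in S(i)}\frac{1+z_{1,j}+\theta z_{2,j}}{1+z_{1,j}+z_{2,j}}$, $z_{2,i}=\lambda\prod_{j\in S(i)}\frac{1+z_{2,j}+\theta z_{1,j}}{1+z_{1,j}+z_{2,j}}$ ($S(i)$ the $k$ direct successors of $i$). A 2-periodic splitting Gibbs measure is one whose solution takes a value $(z_1,z_2)$ on all vertices at even distance from the root and a value $(t_1,t_2)$ on all vertices at odd distance; the solutions considered here have $z_1=z_2=z$ and $t_1=t_2=t$, in which case the equations reduce to $z=\phi(t)$, $t=\phi(z)$. *)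

theory Defs
  imports Complex_Main
begin

definition scwr_phi :: "nat \<Rightarrow> real \<Rightarrow> real \<Rightarrow> real \<Rightarrow> real" where
  "scwr_phi k \<theta> lam x = lam * ((1 + (1 + \<theta>) * x) / (1 + 2 * x)) ^ k"

definition scwr_s_minus :: "nat \<Rightarrow> real \<Rightarrow> real" where
  "scwr_s_minus k \<theta> =
     (real k - 3 - (real k + 1) * \<theta>
       - sqrt ((1 - \<theta>) * (real k ^ 2 - 6 * real k + 1 - (real k + 1) ^ 2 * \<theta>)))
     / (4 * (1 + \<theta>))"

definition scwr_s_plus :: "nat \<Rightarrow> real \<Rightarrow> real" where
  "scwr_s_plus k \<theta> =
     (real k - 3 - (real k + 1) * \<theta>
       + sqrt ((1 - \<theta>) * (real k ^ 2 - 6 * real k + 1 - (real k + 1) ^ 2 * \<theta>)))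
     / (4 * (1 + \<theta>))"

definition scwr_lambda_of :: "nat \<Rightarrow> real \<Rightarrow> real \<Rightarrow> real" where
  "scwr_lambda_of k \<theta> s = s * ((1 + 2 * s) / (1 + (1 + \<theta>) * s)) ^ k"

text \<open>A 2-periodic solution of the tree equations: value (z1,z2) at even-distance
  vertices, (t1,t2) at odd-distance vertices, all positive. Since every vertex has
  exactly k direct successors, all lying at the other parity, the tree equations
  reduce to the following four equations.\<close>
definition scwr_two_periodic_solution ::
  "nat \<Rightarrow> real \<Rightarrow> real \<Rightarrow> real \<times> real \<Rightarrow> real \<times> real \<Rightarrow> bool" where
  "scwr_two_periodic_solution k \<theta> lam zz tt \<longleftrightarrow>
     (let (z1, z2) = zz; (t1, t2) = tt in
        z1 > 0 \<and> z2 > 0 \<and> t1 > 0 \<and> t2 > 0 \<and>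
        z1 = lam * ((1 + t1 + \<theta> * t2) / (1 + t1 + t2)) ^ k \<and>
        z2 = lam * ((1 + t2 + \<theta> * t1) / (1 + t1 + t2)) ^ k \<and>
        t1 = lam * ((1 + z1 + \<theta> * z2) / (1 + z1 + z2)) ^ k \<and>
        t2 = lam * ((1 + z2 + \<theta> * z1) / (1 + z1 + z2)) ^ k)"

end

theory Submission
  imports Defs
begin

lemma f_pos: "0 \<le> x \<Longrightarrow> 0 < \<theta> \<Longrightarrow> 0 < (1 + (1 + \<theta>) * x) / (1 + 2 * x :: real)"
  by (simp add: add_pos_nonneg)

lemma f_lt1: "0 < x \<Longrightarrow> \<theta> < 1 \<Longrightarrow> (1 + (1 + \<theta>) * x) / (1 + 2 * x :: real) < 1"
  by (simp add: divide_less_eq add_pos_pos)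

lemma f_anti: "0 \<le> x \<Longrightarrow> x \<le> y \<Longrightarrow> \<theta> < 1 \<Longrightarrow>
  (1 + (1 + \<theta>) * y) / (1 + 2 * y :: real) \<le> (1 + (1 + \<theta>) * x) / (1 + 2 * x)"
proof -
  assume a: "0 \<le> x" "x \<le> y" "\<theta> < 1"
  have "(1 + (1 + \<theta>) * y) * (1 + 2 * x) \<le> (1 + (1 + \<theta>) * x) * (1 + 2 * y)"
  proof -
    have "(1 + (1 + \<theta>) * x) * (1 + 2 * y) - (1 + (1 + \<theta>) * y) * (1 + 2 * x) = (1 - \<theta>) * (y - x)"
      by (simp add: algebra_simps)
    moreover have "(1 - \<theta>) * (y - x) \<ge> 0" using a by simp
    ultimately show ?thesis by linarith
  qed
  then show ?thesis using a by (simp add: divide_simps)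
qed

lemma r_mono: "0 \<le> x \<Longrightarrow> x \<le> y \<Longrightarrow> 0 < \<theta> \<Longrightarrow> \<theta> < 1 \<Longrightarrow>
  (1 + 2 * x) / (1 + (1 + \<theta>) * x :: real) \<le> (1 + 2 * y) / (1 + (1 + \<theta>) * y)"
proof -
  assume a: "0 \<le> x" "x \<le> y" "0 < \<theta>" "\<theta> < 1"
  have p1: "0 < 1 + (1 + \<theta>) * x" "0 < 1 + (1 + \<theta>) * y" using a by (simp_all add: add_pos_nonneg)
  have "(1 + 2 * x) * (1 + (1 + \<theta>) * y) \<le> (1 + 2 * y) * (1 + (1 + \<theta>) * x)"
  proof -
    have "(1 + 2 * y) * (1 + (1 + \<theta>) * x) - (1 + 2 * x) * (1 + (1 + \<theta>) * y) = (1 - \<theta>) * (y - x)"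
      by (simp add: algebra_simps)
    moreover have "(1 - \<theta>) * (y - x) \<ge> 0" using a by simp
    ultimately show ?thesis by linarith
  qed
  then show ?thesis using p1 by (simp add: divide_simps)
qed

lemma lo_mono: "0 \<le> x \<Longrightarrow> x < y \<Longrightarrow> 0 < \<theta> \<Longrightarrow> \<theta> < 1 \<Longrightarrow>
  scwr_lambda_of k \<theta> x < scwr_lambda_of k \<theta> y"
proof -
  assume a: "0 \<le> x" "x < y" "0 < \<theta>" "\<theta> < 1"
  let ?r = "\<lambda>x. (1 + 2 * x) / (1 + (1 + \<theta>) * x :: real)"
  have rp: "0 < ?r x" "0 < ?r y" using a by (simp_all add: add_pos_nonneg)
  have "?r x ^ k \<le> ?r y ^ k" using r_mono[of x y \<theta>] a rp by (intro power_mono) auto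
  moreover have "0 < ?r y ^ k" using rp by simp
  ultimately have "x * ?r x ^ k < y * ?r y ^ k" using a
  proof -
    assume h: "?r x ^ k \<le> ?r y ^ k" "0 < ?r y ^ k"
    have "x * ?r x ^ k \<le> x * ?r y ^ k" using h a by (simp add: mult_left_mono)
    also have "\<dots> < y * ?r y ^ k" using h a by (simp add: mult_strict_right_mono)
    finally show ?thesis .
  qed
  then show ?thesis unfolding scwr_lambda_of_def .
qed

lemma f_deriv: "-1/2 < x \<Longrightarrow>
  ((\<lambda>x. (1 + (1 + \<theta>) * x) / (1 + 2 * x :: real)) has_real_derivative (\<theta> - 1) / (1 + 2 * x)^2) (at x)"
  apply (rule derivative_eq_intros refl | simp)+
  apply (simp add: field_simps power2_eq_square)
  done

theorem mainTheorem18: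
  fixes k :: nat and \<theta> lam :: real
  assumes hk: "k \<ge> 6"
    and h\<theta>0: "0 < \<theta>"
    and h\<theta>1: "\<theta> < (real k ^ 2 - 6 * real k + 1) / (real k + 1) ^ 2"
    and hlam: "scwr_lambda_of k \<theta> (scwr_s_minus k \<theta>) < lam"
               "lam < scwr_lambda_of k \<theta> (scwr_s_plus k \<theta>)"
  shows "\<exists>xs x0 x1.
           xs > 0 \<and> scwr_phi k \<theta> lam xs = xs \<and>
           (\<forall>y>0. scwr_phi k \<theta> lam y = y \<longrightarrow> y = xs) \<and>
           x0 > 0 \<and> x1 > 0 \<and> x0 \<noteq> x1 \<and>
           scwr_phi k \<theta> lam x0 = x1 \<and> scwr_phi k \<theta> lam x1 = x0 \<and>
           scwr_two_periodic_solution k \<theta> lam (xs, xs) (xs, xs) \<and>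
           scwr_two_periodic_solution k \<theta> lam (x0, x0) (x1, x1) \<and>
           scwr_two_periodic_solution k \<theta> lam (x1, x1) (x0, x0)"
proof -
  have kr: "real k \<ge> 6" using hk by simp
  have kp: "(real k + 1) ^ 2 > 0" by simp
  have B: "\<theta> * (real k + 1) ^ 2 < real k ^ 2 - 6 * real k + 1"
    using h\<theta>1 kp by (simp add: pos_less_divide_eq mult.commute)
  have th1: "\<theta> < 1"
  proof -
    have "real k ^ 2 - 6 * real k + 1 < (real k + 1) ^ 2" using kr by (simp add: power2_eq_square algebra_simps)
    then have "\<theta> * (real k + 1) ^ 2 < 1 * (real k + 1) ^ 2" using B by linarith
    then show ?thesis using kp mult_less_cancel_right_pos by blast
  qed
  define A where "A = real k - 3 - (real k + 1) * \<theta>"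
  define D where "D = (1 - \<theta>) * (real k ^ 2 - 6 * real k + 1 - (real k + 1) ^ 2 * \<theta>)"
  have Dp: "D > 0" unfolding D_def using th1 B by (simp add: mult.commute)
  have AD: "A ^ 2 - D = 8 + 8 * \<theta>" unfolding A_def D_def by (simp add: algebra_simps power2_eq_square)
  have Ap: "A > 0"
  proof -
    have "(real k + 1) * \<theta> * (real k + 1) < (real k - 3) * (real k + 1)"
    proof -
      have "(real k + 1) * \<theta> * (real k + 1) = \<theta> * (real k + 1) ^ 2" by (simp add: power2_eq_square)
      also have "\<dots> < real k ^ 2 - 6 * real k + 1" by (rule B)
      also have "\<dots> < (real k - 3) * (real k + 1)" using kr by (simp add: power2_eq_square algebra_simps)
      finally show ?thesis .
    qed
    moreover have "real k + 1 > 0" by simp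
    ultimately have "(real k + 1) * \<theta> < real k - 3" using mult_less_cancel_right_pos by blast
    then show ?thesis unfolding A_def by simp
  qed
  define r where "r = sqrt D"
  have r2: "r ^ 2 = D" unfolding r_def using Dp by simp
  have rp: "r > 0" unfolding r_def using Dp by simp
  have rA: "r < A"
  proof -
    have "r ^ 2 < A ^ 2" using r2 AD h\<theta>0 by linarith
    then show ?thesis using Ap rp using power_less_imp_less_base by fastforce
  qed
  define sm where "sm = (A - r) / (4 * (1 + \<theta>))"
  define sp where "sp = (A + r) / (4 * (1 + \<theta>))"
  have smd: "scwr_s_minus k \<theta> = sm" unfolding sm_def scwr_s_minus_def A_def r_def D_def by simp
  have spd: "scwr_s_plus k \<theta> = sp" unfolding sp_def scwr_s_plus_def A_def r_def D_def by simp
  have smp: "sm > 0" unfolding sm_def using rA h\<theta>0 by simp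
  have smsp: "sm < sp" unfolding sm_def sp_def using rp h\<theta>0 by (simp add: divide_strict_right_mono)
  have quad: "2 * (1 + \<theta>) * x ^ 2 - A * x + 1 < 0" if "sm < x" "x < sp" for x
  proof -
    have e: "8 * (1 + \<theta>) * (2 * (1 + \<theta>) * x ^ 2 - A * x + 1) = 16 * (1 + \<theta>)^2 * ((x - sm) * (x - sp))"
    proof -
      have "16 * (1 + \<theta>)^2 * ((x - sm) * (x - sp)) = (4 * (1 + \<theta>) * x - A + r) * (4 * (1 + \<theta>) * x - A - r)"
      proof -
        have c: "4 * (1 + \<theta>) \<noteq> 0" using h\<theta>0 by simp
        have 1: "4 * (1 + \<theta>) * (x - sm) = 4 * (1 + \<theta>) * x - A + r"
        proof -
          have "4 * (1 + \<theta>) * sm = A - r" unfolding sm_def using c by simp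
          then show ?thesis by (simp add: right_diff_distrib)
        qed
        have 2: "4 * (1 + \<theta>) * (x - sp) = 4 * (1 + \<theta>) * x - A - r"
        proof -
          have "4 * (1 + \<theta>) * sp = A + r" unfolding sp_def using c by simp
          then show ?thesis by (simp add: right_diff_distrib)
        qed
        have "16 * (1 + \<theta>)^2 * ((x - sm) * (x - sp)) = (4 * (1 + \<theta>) * (x - sm)) * (4 * (1 + \<theta>) * (x - sp))"
          by (simp add: power2_eq_square algebra_simps)
        also have "\<dots> = (4 * (1 + \<theta>) * x - A + r) * (4 * (1 + \<theta>) * x - A - r)"
          by (simp only: 1 2)
        finally show ?thesis .
      qed
      also have "\<dots> = (4 * (1 + \<theta>) * x - A)^2 - r^2" by (simp add: algebra_simps power2_eq_square)
      also have "\<dots> = 8 * (1 + \<theta>) * (2 * (1 + \<theta>) * x ^ 2 - A * x + 1)"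
        using r2 AD by (simp add: algebra_simps power2_eq_square)
      finally show ?thesis by simp
    qed
    have "(x - sm) * (x - sp) < 0" using that by (simp add: mult_pos_neg)
    then have "16 * (1 + \<theta>)^2 * ((x - sm) * (x - sp)) < 0" using h\<theta>0 by (simp add: mult_pos_neg)
    then have "8 * (1 + \<theta>) * (2 * (1 + \<theta>) * x ^ 2 - A * x + 1) < 0" using e by simp
    then show ?thesis using h\<theta>0 by (simp add: mult_less_0_iff)
  qed
  have lamp: "lam > 0"
  proof -
    have "scwr_lambda_of k \<theta> sm > 0" unfolding scwr_lambda_of_def using smp h\<theta>0
      by (simp add: add_pos_pos)
    then show ?thesis using hlam smd by simp
  qed
  define f where "f = (\<lambda>x. (1 + (1 + \<theta>) * x) / (1 + 2 * x :: real))"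
  define \<phi> where "\<phi> = scwr_phi k \<theta> lam"
  have phif: "\<phi> x = lam * f x ^ k" for x unfolding \<phi>_def f_def scwr_phi_def by simp
  have fpos: "0 \<le> x \<Longrightarrow> f x > 0" for x unfolding f_def using f_pos h\<theta>0 by blast
  have phipos: "0 \<le> x \<Longrightarrow> \<phi> x > 0" for x using fpos lamp phif by simp
  have phianti: "0 \<le> x \<Longrightarrow> x \<le> y \<Longrightarrow> \<phi> y \<le> \<phi> x" for x y
  proof -
    assume a: "0 \<le> x" "x \<le> y"
    have "f y ^ k \<le> f x ^ k" using f_anti[of x y \<theta>] a th1 fpos[of y] unfolding f_def
      by (intro power_mono) auto
    then show ?thesis using phif lamp by (simp add: mult_left_mono)
  qed
  have cont: "0 \<le> x \<Longrightarrow> isCont \<phi> x" for x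
    unfolding \<phi>_def scwr_phi_def by (intro continuous_intros) auto
  have "\<exists>x\<ge>0. x \<le> lam \<and> (\<lambda>x. x - \<phi> x) x = 0"
  proof (rule IVT)
    show "(\<lambda>x. x - \<phi> x) 0 \<le> 0" using phif lamp unfolding f_def by simp
    have "f lam < 1" unfolding f_def using f_lt1 lamp th1 by blast
    then have "f lam ^ k \<le> 1" using fpos[of lam] lamp by (simp add: power_le_one)
    then have "\<phi> lam \<le> lam" using phif lamp by (simp add: mult_left_le)
    then show "0 \<le> (\<lambda>x. x - \<phi> x) lam" by simp
    show "0 \<le> lam" using lamp by simp
    show "\<forall>x. 0 \<le> x \<and> x \<le> lam \<longrightarrow> isCont (\<lambda>x. x - \<phi> x) x"
      using cont by (auto intro: continuous_intros)
  qed
  then obtain xs where xs0: "xs \<ge> 0" and xsfix: "\<phi> xs = xs" by auto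
  have xsp: "xs > 0" using phipos[OF xs0] xsfix by simp
  have uniq: "\<forall>y>0. \<phi> y = y \<longrightarrow> y = xs"
  proof (intro allI impI)
    fix y assume y: "y > 0" "\<phi> y = y"
    show "y = xs"
    proof (rule ccontr)
      assume "y \<noteq> xs"
      then consider "y < xs" | "xs < y" by linarith
      then show False
      proof cases
        case 1 then show False using phianti[of y xs] y xsfix by simp
      next
        case 2 then show False using phianti[of xs y] xs0 y xsfix by simp
      qed
    qed
  qed
  have lamxs: "scwr_lambda_of k \<theta> xs = lam"
  proof -
    have e1: "xs = lam * f xs ^ k" using xsfix phif by simp
    have "(1 + 2 * xs) / (1 + (1 + \<theta>) * xs) = 1 / f xs" unfolding f_def by simp
    have "f xs ^ k > 0" using fpos[OF xs0] by simp
    then have "xs / f xs ^ k = lam"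
    proof -
      assume "0 < f xs ^ k"
      then show ?thesis using e1 using fpos[OF xs0] by (simp add: divide_simps)
    qed
    moreover have "xs * (1 / f xs) ^ k = xs / f xs ^ k" by (simp add: power_one_over)
    ultimately show ?thesis unfolding scwr_lambda_of_def
      using \<open>(1 + 2 * xs) / (1 + (1 + \<theta>) * xs) = 1 / f xs\<close> by simp
  qed
  have xs_sm: "sm < xs"
  proof (rule ccontr)
    assume "\<not> sm < xs"
    then have "xs \<le> sm" by simp
    then have "scwr_lambda_of k \<theta> xs \<le> scwr_lambda_of k \<theta> sm"
      using lo_mono[of xs sm \<theta> k] xs0 h\<theta>0 th1 by (cases "xs = sm") auto
    then show False using lamxs hlam smd by simp
  qed
  have xs_sp: "xs < sp"
  proof (rule ccontr)
    assume "\<not> xs < sp"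
    then have "sp \<le> xs" by simp
    then have "scwr_lambda_of k \<theta> sp \<le> scwr_lambda_of k \<theta> xs"
      using lo_mono[of sp xs \<theta> k] smp smsp h\<theta>0 th1 by (cases "xs = sp") auto
    then show False using lamxs hlam spd by simp
  qed
  have q: "2 * (1 + \<theta>) * xs ^ 2 - A * xs + 1 < 0" using quad xs_sm xs_sp by blast
  define d where "d = (\<lambda>x. lam * (real k * f x ^ (k - 1) * ((\<theta> - 1) / (1 + 2 * x)^2)))"
  have dphi: "(\<phi> has_real_derivative d x) (at x)" if "0 \<le> x" for x
  proof -
    have "(f has_real_derivative (\<theta> - 1) / (1 + 2 * x)^2) (at x)"
      unfolding f_def using f_deriv that by simp
    then have "((\<lambda>x. lam * f x ^ k) has_real_derivative d x) (at x)"
      unfolding d_def by (intro derivative_eq_intros) auto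
    moreover have "(\<lambda>x. lam * f x ^ k) = \<phi>" using phif by auto
    ultimately show ?thesis by simp
  qed
  have dxs: "d xs < -1"
  proof -
    obtain m where m: "k = Suc m" using hk by (cases k) auto
    have Fp: "f xs > 0" using fpos[OF xs0] .
    have fk: "f xs ^ (k - 1) = f xs ^ k / f xs" using m Fp by simp
    have e1: "lam * f xs ^ k = xs" using xsfix phif by simp
    have "d xs = real k * (lam * f xs ^ k) * (\<theta> - 1) / ((1 + 2 * xs)^2 * f xs)"
      unfolding d_def fk by (simp add: mult_ac)
    also have "\<dots> = real k * xs * (\<theta> - 1) / ((1 + 2 * xs)^2 * f xs)"
      by (simp only: e1)
    also have "(1 + 2 * xs)^2 * f xs = (1 + 2 * xs) * (1 + (1 + \<theta>) * xs)"
    proof -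
      have "1 + 2 * xs \<noteq> 0" using xs0 by simp
      then show ?thesis unfolding f_def by (simp add: power2_eq_square)
    qed
    finally have dd: "d xs = real k * xs * (\<theta> - 1) / ((1 + 2 * xs) * (1 + (1 + \<theta>) * xs))" .
    have den: "(1 + 2 * xs) * (1 + (1 + \<theta>) * xs) > 0" using xs0 h\<theta>0 by (simp add: add_pos_nonneg)
    have "(1 + 2 * xs) * (1 + (1 + \<theta>) * xs) - real k * xs * (1 - \<theta>) = 2 * (1 + \<theta>) * xs ^ 2 - A * xs + 1"
      unfolding A_def by (simp add: algebra_simps power2_eq_square)
    then have "real k * xs * (\<theta> - 1) < - ((1 + 2 * xs) * (1 + (1 + \<theta>) * xs))" using q
      by (simp add: algebra_simps)
    then show ?thesis unfolding dd using den by (simp add: divide_less_eq)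
  qed
  define g where "g = (\<lambda>x. \<phi> (\<phi> x) - x)"
  have dg: "(g has_real_derivative (d xs * d xs - 1)) (at xs)"
  proof -
    have c1: "((\<lambda>x. \<phi> (\<phi> x)) has_real_derivative d (\<phi> xs) * d xs) (at xs)"
      by (rule DERIV_chain2[OF dphi[of "\<phi> xs"] dphi[OF xs0]]) (use xsfix xs0 in simp)
    have c2: "d (\<phi> xs) * d xs = d xs * d xs" using xsfix by simp
    have "((\<lambda>x. \<phi> (\<phi> x)) has_real_derivative d xs * d xs) (at xs)" using c1 c2 by metis
    then have "((\<lambda>x. \<phi> (\<phi> x) - x) has_real_derivative d xs * d xs - 1) (at xs)"
      by (rule DERIV_diff) (rule DERIV_ident)
    then show ?thesis unfolding g_def .
  qed
  have dgp: "d xs * d xs - 1 > 0"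
  proof -
    have "1 < - d xs" using dxs by simp
    then have "1 * 1 < (- d xs) * (- d xs)" by (intro mult_strict_mono) auto
    then show ?thesis by simp
  qed
  obtain e where e: "e > 0" "\<forall>h>0. h < e \<longrightarrow> g (xs - h) < g xs"
    using DERIV_pos_inc_left[OF dg dgp] by blast
  define y where "y = xs - min (e/2) (xs/2)"
  have y0: "0 < y" "y < xs" unfolding y_def using e xsp by auto
  have gy: "g y < 0"
  proof -
    have "g y < g xs" unfolding y_def using e xsp by (intro e(2)[rule_format]) auto
    moreover have "g xs = 0" unfolding g_def using xsfix by simp
    ultimately show ?thesis by simp
  qed
  have g0: "g 0 > 0" unfolding g_def using phipos[of "\<phi> 0"] phipos[of 0] by simp
  have "\<exists>x\<ge>0. x \<le> y \<and> g x = 0"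
  proof (rule IVT2)
    show "g y \<le> 0" using gy by simp
    show "0 \<le> g 0" using g0 by simp
    show "0 \<le> y" using y0 by simp
    show "\<forall>x. 0 \<le> x \<and> x \<le> y \<longrightarrow> isCont g x"
    proof (intro allI impI)
      fix x assume x: "0 \<le> x \<and> x \<le> y"
      have "isCont (\<lambda>x. \<phi> (\<phi> x)) x"
        using continuous_at_compose[OF cont cont, of x] x phipos[of x] by (simp add: o_def)
      then show "isCont g x" unfolding g_def by (intro continuous_intros)
    qed
  qed
  then obtain x0 where x0: "0 \<le> x0" "x0 \<le> y" "g x0 = 0" by auto
  have x0p: "x0 > 0" using x0 g0 by (cases "x0 = 0") auto
  define x1 where "x1 = \<phi> x0"
  have x1p: "x1 > 0" unfolding x1_def using phipos x0 by simp
  have x10: "\<phi> x1 = x0" using x0(3) unfolding g_def x1_def by simp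
  have ne: "x0 \<noteq> x1"
  proof
    assume "x0 = x1"
    then have "\<phi> x0 = x0" using x10 by simp
    then have "x0 = xs" using uniq x0p by blast
    then show False using x0 y0 by simp
  qed
  have tps: "scwr_two_periodic_solution k \<theta> lam (a, a) (b, b)"
    if "a > 0" "b > 0" "\<phi> a = b" "\<phi> b = a" for a b
  proof -
    have q1: "(1 + a + \<theta> * a) = 1 + (1 + \<theta>) * a" "1 + a + a = 1 + 2 * a"
         "(1 + b + \<theta> * b) = 1 + (1 + \<theta>) * b" "1 + b + b = 1 + 2 * b" by (simp_all add: algebra_simps)
    have ea: "b = lam * ((1 + a + \<theta> * a) / (1 + a + a)) ^ k"
      using that(3) unfolding q1 \<phi>_def scwr_phi_def by simp
    have eb: "a = lam * ((1 + b + \<theta> * b) / (1 + b + b)) ^ k"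
      using that(4) unfolding q1 \<phi>_def scwr_phi_def by simp
    show ?thesis unfolding scwr_two_periodic_solution_def Let_def prod.case
      using that(1,2) ea eb by blast
  qed
  have F1: "scwr_phi k \<theta> lam xs = xs" using xsfix unfolding \<phi>_def .
  have F2: "\<forall>y>0. scwr_phi k \<theta> lam y = y \<longrightarrow> y = xs" using uniq unfolding \<phi>_def .
  have F3: "scwr_phi k \<theta> lam x0 = x1" unfolding x1_def \<phi>_def ..
  have F4: "scwr_phi k \<theta> lam x1 = x0" using x10 unfolding \<phi>_def .
  have T1: "scwr_two_periodic_solution k \<theta> lam (xs, xs) (xs, xs)" by (rule tps[OF xsp xsp xsfix xsfix])
  have T2: "scwr_two_periodic_solution k \<theta> lam (x0, x0) (x1, x1)" by (rule tps[OF x0p x1p x1_def[symmetric] x10])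
  have T3: "scwr_two_periodic_solution k \<theta> lam (x1, x1) (x0, x0)" by (rule tps[OF x1p x0p x10 x1_def[symmetric]])
  show ?thesis using xsp x0p x1p ne F1 F2 F3 F4 T1 T2 T3 by blast
qed

end
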